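(* Let $S$ be a profinite semigroup such that, for each integer $n\geq 1$, $S$ admits only finitely many open congruences of index $n$. Then $S$ has a fundamental system of open fully invariant congruences. In particular, this holds if $S$ is finitely generated (as a profinite semigroup).
   Context: A congruence $\rho$ on a profinite semigroup $S$ is open if it is an open subset of $S\times S$ (equivalently, it is the kernel of a continuous surjection from $S$ onto a finite semigroup). The index of an open congruence $\rho$ is the cardinality of $S/\rho$. A congruence $\rho$ is fully invariant if for every continuous endomorphism $f\colon S\to S$, $(x,y)\in\rho$ implies $(f(x),f(y))\in\rho$. The unique uniformity on the compact Hausdorff space $S$ has the open congruences as a fundamental system of entourages; a "fundamental system of open fully invariant congruences" means a family of open fully invariant congruences such that every open congruence on $S$ contains one of them. $S$ is finitely generated if some finite subset generates a dense subsemigroup. *)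

theory Defs
  imports "HOL-Analysis.Analysis"
begin

text \<open>A semigroup is modelled by a type of class semigroup_mult carrying a topology;
the underlying set of the semigroup is UNIV.\<close>

definition congruence_sg :: "('a::semigroup_mult \<times> 'a) set \<Rightarrow> bool" where
  "congruence_sg \<rho> \<longleftrightarrow> equiv UNIV \<rho> \<and>
     (\<forall>x y z. (x, y) \<in> \<rho> \<longrightarrow> (z * x, z * y) \<in> \<rho> \<and> (x * z, y * z) \<in> \<rho>)"

definition open_congruence :: "('a::{semigroup_mult,topological_space} \<times> 'a) set \<Rightarrow> bool" where
  "open_congruence \<rho> \<longleftrightarrow> congruence_sg \<rho> \<and> open \<rho>"

definition cong_index :: "('a \<times> 'a) set \<Rightarrow> nat" where
  "cong_index \<rho> = card (UNIV // \<rho>)"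

definition continuous_endo :: "('a::{semigroup_mult,topological_space} \<Rightarrow> 'a) \<Rightarrow> bool" where
  "continuous_endo f \<longleftrightarrow> continuous_on UNIV f \<and> (\<forall>x y. f (x * y) = f x * f y)"

definition fully_invariant :: "('a::{semigroup_mult,topological_space} \<times> 'a) set \<Rightarrow> bool" where
  "fully_invariant \<rho> \<longleftrightarrow>
     (\<forall>f. continuous_endo f \<longrightarrow> (\<forall>x y. (x, y) \<in> \<rho> \<longrightarrow> (f x, f y) \<in> \<rho>))"

text \<open>Profinite semigroup: compact Hausdorff topological semigroup that is residually finite,
i.e. any two distinct points are separated by an open congruence (equivalently, by a continuous
homomorphism onto a finite discrete semigroup).\<close>
definition profinite_semigroup :: "'a::{semigroup_mult,topological_space} itself \<Rightarrow> bool" where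
  "profinite_semigroup _ \<longleftrightarrow>
     compact (UNIV :: 'a set) \<and>
     (\<forall>x y :: 'a. x \<noteq> y \<longrightarrow> (\<exists>U V. open U \<and> open V \<and> x \<in> U \<and> y \<in> V \<and> U \<inter> V = {})) \<and>
     continuous_on (UNIV :: ('a \<times> 'a) set) (\<lambda>p. fst p * snd p) \<and>
     (\<forall>x y :: 'a. x \<noteq> y \<longrightarrow> (\<exists>\<rho>. open_congruence \<rho> \<and> (x, y) \<notin> \<rho>))"

definition gen_subsemigroup :: "'a::semigroup_mult set \<Rightarrow> 'a set" where
  "gen_subsemigroup A = \<Inter>{T. A \<subseteq> T \<and> (\<forall>x\<in>T. \<forall>y\<in>T. x * y \<in> T)}"

definition finitely_generated_profinite :: "'a::{semigroup_mult,topological_space} itself \<Rightarrow> bool" where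
  "finitely_generated_profinite _ \<longleftrightarrow>
     (\<exists>A :: 'a set. finite A \<and> closure (gen_subsemigroup A) = UNIV)"

definition has_fund_system_fi :: "'a::{semigroup_mult,topological_space} itself \<Rightarrow> bool" where
  "has_fund_system_fi _ \<longleftrightarrow>
     (\<exists>\<F> :: ('a \<times> 'a) set set.
        (\<forall>\<rho>\<in>\<F>. open_congruence \<rho> \<and> fully_invariant \<rho>) \<and>
        (\<forall>\<sigma>. open_congruence \<sigma> \<longrightarrow> (\<exists>\<rho>\<in>\<F>. \<rho> \<subseteq> \<sigma>)))"

end

theory Submission
  imports Defs
begin


lemma open_slice:
  fixes \<rho> :: "('a::topological_space \<times> 'a) set"
  assumes "open \<rho>" shows "open (\<rho>``{x})"
proof -
  have "\<rho>``{x} = Pair x -` \<rho>" by auto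
  moreover have "continuous_on UNIV (Pair x :: 'a \<Rightarrow> 'a \<times> 'a)"
    by (intro continuous_on_Pair continuous_on_const continuous_on_id)
  ultimately show ?thesis using open_vimage assms by metis
qed

lemma cong_equiv: "congruence_sg \<rho> \<Longrightarrow> equiv UNIV \<rho>"
  by (simp add: congruence_sg_def)

lemma compact_quotient_finite:
  fixes \<rho> :: "('a::{semigroup_mult,topological_space} \<times> 'a) set"
  assumes c: "compact (UNIV::'a set)" and oc: "open_congruence \<rho>"
  shows "finite (UNIV // \<rho>)" "cong_index \<rho> \<ge> 1"
proof -
  have eq: "equiv UNIV \<rho>" using oc by (simp add: open_congruence_def congruence_sg_def)
  have op: "open \<rho>" using oc by (simp add: open_congruence_def)
  have cov: "UNIV \<subseteq> \<Union>(UNIV // \<rho>)" using eq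
    by (metis Union_quotient subset_refl)
  have opn: "\<forall>B\<in>UNIV // \<rho>. open B"
    using op open_slice by (auto simp: quotient_def)
  obtain T where T: "T \<subseteq> UNIV // \<rho>" "finite T" "UNIV \<subseteq> \<Union>T"
    using compactE[OF c cov] opn by metis
  have "UNIV // \<rho> \<subseteq> T"
  proof
    fix C assume C: "C \<in> UNIV // \<rho>"
    then obtain x where x: "C = \<rho>``{x}" by (auto simp: quotient_def)
    have "x \<in> C" using x eq by (simp add: equiv_def refl_on_def)
    obtain D where D: "D \<in> T" "x \<in> D" using T(3) by blast
    have "D \<in> UNIV // \<rho>" using D T by auto
    then show "C \<in> T" using quotient_disj[OF eq C \<open>D \<in> UNIV // \<rho>\<close>] D \<open>x \<in> C\<close> by auto
  qed
  then show fin: "finite (UNIV // \<rho>)" using T finite_subset by auto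
  have "UNIV // \<rho> \<noteq> {}" by (auto simp: quotient_def)
  then show "cong_index \<rho> \<ge> 1" using fin unfolding cong_index_def
    by (simp add: Suc_le_eq card_gt_0_iff)
qed

lemma inter_congruence:
  assumes ne: "\<F> \<noteq> {}" and c: "\<forall>\<tau>\<in>\<F>. congruence_sg (\<tau>::('a::semigroup_mult \<times> 'a) set)"
  shows "congruence_sg (\<Inter>\<F>)"
proof -
  have e: "\<And>\<tau>. \<tau> \<in> \<F> \<Longrightarrow> refl \<tau> \<and> sym \<tau> \<and> trans \<tau>"
    using c by (auto simp: congruence_sg_def equiv_def)
  have m: "\<And>\<tau> x y z. \<tau> \<in> \<F> \<Longrightarrow> (x, y) \<in> \<tau> \<Longrightarrow> (z * x, z * y) \<in> \<tau> \<and> (x * z, y * z) \<in> \<tau>"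
    using c by (simp add: congruence_sg_def)
  have "refl (\<Inter>\<F>)" using e by (simp add: refl_on_def)
  moreover have "sym (\<Inter>\<F>)" unfolding sym_def using e by (meson InterD InterI symD)
  moreover have "trans (\<Inter>\<F>)" unfolding trans_def using e by (meson InterD InterI transD)
  moreover have "\<forall>x y z. (x, y) \<in> \<Inter>\<F> \<longrightarrow> (z * x, z * y) \<in> \<Inter>\<F> \<and> (x * z, y * z) \<in> \<Inter>\<F>"
    using m by blast
  ultimately show ?thesis by (simp add: congruence_sg_def equiv_def)
qed

lemma preimage_cong:
  fixes \<tau> :: "('a::{semigroup_mult,topological_space} \<times> 'a) set"
  assumes oc: "open_congruence \<tau>" and f: "continuous_endo f"
    and fin: "finite (UNIV // \<tau>)"
  defines "\<tau>' \<equiv> {(x,y). (f x, f y) \<in> \<tau>}"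
  shows "open_congruence \<tau>'" "cong_index \<tau>' \<ge> 1" "cong_index \<tau>' \<le> cong_index \<tau>"
proof -
  have eq: "equiv UNIV \<tau>" using oc by (simp add: open_congruence_def congruence_sg_def)
  have hom: "\<And>x y. f (x*y) = f x * f y" and cf: "continuous_on UNIV f"
    using f by (auto simp: continuous_endo_def)
  have e: "refl \<tau>" "sym \<tau>" "trans \<tau>" using eq by (auto simp: equiv_def)
  have m: "\<And>x y z. (x, y) \<in> \<tau> \<Longrightarrow> (z * x, z * y) \<in> \<tau> \<and> (x * z, y * z) \<in> \<tau>"
    using oc by (simp add: open_congruence_def congruence_sg_def)
  have "refl \<tau>'" using e(1) by (simp add: refl_on_def \<tau>'_def)
  moreover have "sym \<tau>'" using e(2) unfolding sym_def \<tau>'_def by blast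
  moreover have "trans \<tau>'" using e(3) unfolding trans_def \<tau>'_def by blast
  moreover have "\<forall>x y z. (x, y) \<in> \<tau>' \<longrightarrow> (z * x, z * y) \<in> \<tau>' \<and> (x * z, y * z) \<in> \<tau>'"
    using m hom by (simp add: \<tau>'_def)
  ultimately have "congruence_sg \<tau>'" by (simp add: congruence_sg_def equiv_def)
  moreover have "open \<tau>'"
  proof -
    have "\<tau>' = (\<lambda>p. (f (fst p), f (snd p))) -` \<tau>" by (auto simp: \<tau>'_def)
    moreover have "continuous_on UNIV (\<lambda>p::'a\<times>'a. (f (fst p), f (snd p)))"
      by (intro continuous_on_Pair continuous_on_compose2[OF cf] continuous_on_fst continuous_on_snd continuous_on_id) auto
    ultimately show ?thesis using open_vimage oc by (metis open_congruence_def)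
  qed
  ultimately show "open_congruence \<tau>'" by (simp add: open_congruence_def)
  have sub: "UNIV // \<tau>' \<subseteq> (\<lambda>C. f -` C) ` (UNIV // \<tau>)"
  proof
    fix C assume "C \<in> UNIV // \<tau>'"
    then obtain x where x: "C = \<tau>'``{x}" by (auto simp: quotient_def)
    have "C = f -` (\<tau>``{f x})" using x by (auto simp: \<tau>'_def)
    then show "C \<in> (\<lambda>C. f -` C) ` (UNIV // \<tau>)" by (auto simp: quotient_def)
  qed
  have fin': "finite (UNIV // \<tau>')" using sub fin finite_subset by blast
  have "card (UNIV // \<tau>') \<le> card ((\<lambda>C. f -` C) ` (UNIV // \<tau>))"
    using sub fin by (intro card_mono) auto
  also have "\<dots> \<le> card (UNIV // \<tau>)" using card_image_le fin by blast
  finally show "cong_index \<tau>' \<le> cong_index \<tau>" by (simp add: cong_index_def)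
  have "UNIV // \<tau>' \<noteq> {}" by (auto simp: quotient_def)
  then show "cong_index \<tau>' \<ge> 1" using fin' unfolding cong_index_def
    by (simp add: Suc_le_eq card_gt_0_iff)
qed

lemma part1:
  fixes S :: "'a::{semigroup_mult,topological_space} itself"
  assumes c: "compact (UNIV::'a set)"
    and H: "\<forall>n::nat. n \<ge> 1 \<longrightarrow> finite {\<rho> :: ('a \<times> 'a) set. open_congruence \<rho> \<and> cong_index \<rho> = n}"
  shows "has_fund_system_fi S"
  unfolding has_fund_system_fi_def
proof (intro exI[of _ "{\<rho>. open_congruence \<rho> \<and> fully_invariant \<rho>}"] conjI allI impI)
  show "\<forall>\<rho>\<in>{\<rho>. open_congruence \<rho> \<and> fully_invariant \<rho>}. open_congruence \<rho> \<and> fully_invariant \<rho>"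
    by simp
  fix \<sigma> :: "('a \<times> 'a) set" assume os: "open_congruence \<sigma>"
  define n where "n = cong_index \<sigma>"
  define T where "T = {\<tau>::('a \<times> 'a) set. open_congruence \<tau> \<and> cong_index \<tau> \<in> {1..n}}"
  have "T = (\<Union>k\<in>{1..n}. {\<tau>. open_congruence \<tau> \<and> cong_index \<tau> = k})" by (auto simp: T_def)
  then have finT: "finite T" using H by auto
  have sT: "\<sigma> \<in> T" using os compact_quotient_finite(2)[OF c os] by (simp add: T_def n_def)
  have oc: "open_congruence (\<Inter>T)"
  proof -
    have "congruence_sg (\<Inter>T)" using sT
      by (intro inter_congruence) (auto simp: T_def open_congruence_def)
    moreover have "open (\<Inter>T)" using finT by (intro open_Inter) (auto simp: T_def open_congruence_def)
    ultimately show ?thesis by (simp add: open_congruence_def)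
  qed
  have fi: "fully_invariant (\<Inter>T)"
    unfolding fully_invariant_def
  proof (intro allI impI InterI)
    fix f :: "'a \<Rightarrow> 'a" and x y \<tau> assume f: "continuous_endo f" and xy: "(x, y) \<in> \<Inter>T" and tT: "\<tau> \<in> T"
    have ot: "open_congruence \<tau>" and it: "cong_index \<tau> \<le> n" using tT by (auto simp: T_def)
    note fin = compact_quotient_finite(1)[OF c ot]
    note pc = preimage_cong[OF ot f fin]
    have "{(x, y). (f x, f y) \<in> \<tau>} \<in> T" using pc it by (auto simp: T_def)
    then show "(f x, f y) \<in> \<tau>" using xy by blast
  qed
  show "\<exists>\<rho>\<in>{\<rho>. open_congruence \<rho> \<and> fully_invariant \<rho>}. \<rho> \<subseteq> \<sigma>"
    using oc fi sT by blast
qed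



lemma gen_induct:
  assumes "g \<in> gen_subsemigroup A" "A \<subseteq> P" "\<forall>x\<in>P. \<forall>y\<in>P. x * y \<in> P"
  shows "g \<in> P"
  using assms unfolding gen_subsemigroup_def by blast

lemma cong_determined:
  fixes \<tau> \<tau>' :: "('a::{semigroup_mult,topological_space} \<times> 'a) set"
  assumes o1: "open_congruence \<tau>" and o2: "open_congruence \<tau>'"
    and dense: "closure G = UNIV"
    and agree: "\<And>g h. g \<in> G \<Longrightarrow> h \<in> G \<Longrightarrow> (g, h) \<in> \<tau> \<Longrightarrow> (g, h) \<in> \<tau>'"
  shows "\<tau> \<subseteq> \<tau>'"
proof
  fix p assume p: "p \<in> \<tau>"
  obtain x y where pxy: "p = (x, y)" by (cases p)
  define \<mu> where "\<mu> = \<tau> \<inter> \<tau>'"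
  have e1: "equiv UNIV \<tau>" and e2: "equiv UNIV \<tau>'" using o1 o2 by (auto simp: open_congruence_def congruence_sg_def)
  have "open \<mu>" using o1 o2 by (auto simp: \<mu>_def open_congruence_def)
  have ex: "\<exists>g\<in>G. (z, g) \<in> \<mu>" for z
  proof -
    have "open (\<mu>``{z})" using open_slice[OF \<open>open \<mu>\<close>] .
    moreover have "z \<in> \<mu>``{z}" using e1 e2 by (auto simp: \<mu>_def equiv_def refl_on_def)
    ultimately have "\<mu>``{z} \<inter> G \<noteq> {}" using open_Int_closure_eq_empty dense by (metis Int_UNIV_right empty_iff)
    then show ?thesis by auto
  qed
  obtain g where g: "g \<in> G" "(x, g) \<in> \<mu>" using ex by blast
  obtain h where h: "h \<in> G" "(y, h) \<in> \<mu>" using ex by blast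
  have "(g, h) \<in> \<tau>" using g h p pxy e1 unfolding \<mu>_def
    by (meson IntD1 equiv_def symD transD)
  then have "(g, h) \<in> \<tau>'" using agree g h by blast
  then show "p \<in> \<tau>'" using g h pxy e2 unfolding \<mu>_def
    by (meson IntD2 equiv_def symD transD)
qed

lemma part2:
  fixes A :: "'a::{semigroup_mult,topological_space} set"
  assumes c: "compact (UNIV::'a set)" and fA: "finite A" and dense: "closure (gen_subsemigroup A) = UNIV"
    and n: "n \<ge> 1"
  shows "finite {\<rho> :: ('a \<times> 'a) set. open_congruence \<rho> \<and> cong_index \<rho> = n}"
proof -
  define P where "P = {\<rho> :: ('a \<times> 'a) set. open_congruence \<rho> \<and> cong_index \<rho> = n}"
  define G where "G = gen_subsemigroup A"
  define e where "e \<tau> = (SOME h. bij_betw h (UNIV // \<tau>) {0..<cong_index \<tau>})" for \<tau> :: "('a \<times> 'a) set"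
  define E where "E \<tau> x = e \<tau> (\<tau>``{x})" for \<tau> :: "('a \<times> 'a) set" and x
  define rep where "rep \<tau> i = (SOME x. E \<tau> x = i)" for \<tau> :: "('a \<times> 'a) set" and i
  define code where "code \<tau> = (restrict (E \<tau>) A,
      restrict (\<lambda>(i,j). E \<tau> (rep \<tau> i * rep \<tau> j)) ({..<n} \<times> {..<n}))" for \<tau>
  have bij: "bij_betw (e \<tau>) (UNIV // \<tau>) {0..<n}" if "\<tau> \<in> P" for \<tau>
  proof -
    have "finite (UNIV // \<tau>)" using that n by (auto simp: P_def cong_index_def card_ge_0_finite)
    then have "\<exists>h. bij_betw h (UNIV // \<tau>) {0..<cong_index \<tau>}"
      unfolding cong_index_def by (rule ex_bij_betw_finite_nat)
    then have "bij_betw (e \<tau>) (UNIV // \<tau>) {0..<cong_index \<tau>}"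
      unfolding e_def by (rule someI_ex)
    then show ?thesis using that by (simp add: P_def)
  qed
  have Elt: "E \<tau> x < n" if "\<tau> \<in> P" for \<tau> x
  proof -
    have "\<tau>``{x} \<in> UNIV // \<tau>" by (auto simp: quotient_def)
    then show ?thesis using bij[OF that] unfolding E_def bij_betw_def by auto
  qed
  have Eiff: "E \<tau> x = E \<tau> y \<longleftrightarrow> (x, y) \<in> \<tau>" if "\<tau> \<in> P" for \<tau> x y
  proof -
    have eq: "equiv UNIV \<tau>" using that by (auto simp: P_def open_congruence_def congruence_sg_def)
    have inj: "inj_on (e \<tau>) (UNIV // \<tau>)" using bij[OF that] by (simp add: bij_betw_def)
    have "E \<tau> x = E \<tau> y \<longleftrightarrow> \<tau>``{x} = \<tau>``{y}"
      unfolding E_def using inj by (auto simp: quotient_def inj_on_def)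
    also have "\<dots> \<longleftrightarrow> (x, y) \<in> \<tau>" using eq_equiv_class_iff[OF eq] by simp
    finally show ?thesis .
  qed
  have rep: "(rep \<tau> (E \<tau> x), x) \<in> \<tau>" if "\<tau> \<in> P" for \<tau> x
  proof -
    have "E \<tau> (rep \<tau> (E \<tau> x)) = E \<tau> x" unfolding rep_def by (rule someI_ex) blast
    then show ?thesis using Eiff[OF that] by blast
  qed
  have Emul: "E \<tau> (x * y) = E \<tau> (rep \<tau> (E \<tau> x) * rep \<tau> (E \<tau> y))" if "\<tau> \<in> P" for \<tau> x y
  proof -
    have eq: "equiv UNIV \<tau>" using that by (auto simp: P_def open_congruence_def congruence_sg_def)
    have m: "\<And>x y z. (x, y) \<in> \<tau> \<Longrightarrow> (z * x, z * y) \<in> \<tau> \<and> (x * z, y * z) \<in> \<tau>"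
      using that by (simp add: P_def open_congruence_def congruence_sg_def)
    have "(rep \<tau> (E \<tau> x) * rep \<tau> (E \<tau> y), x * rep \<tau> (E \<tau> y)) \<in> \<tau>"
      using m[OF rep[OF that, of x], of "rep \<tau> (E \<tau> y)"] by simp
    moreover have "(x * rep \<tau> (E \<tau> y), x * y) \<in> \<tau>" using m[OF rep[OF that, of y], of x] by simp
    ultimately have "(rep \<tau> (E \<tau> x) * rep \<tau> (E \<tau> y), x * y) \<in> \<tau>"
      using eq by (meson equiv_def transD)
    then show ?thesis using Eiff[OF that] by metis
  qed
  have inj: "inj_on code P"
  proof (rule inj_onI)
    fix \<tau> \<tau>' assume t: "\<tau> \<in> P" and t': "\<tau>' \<in> P" and cd: "code \<tau> = code \<tau>'"
    have r: "restrict (E \<tau>) A = restrict (E \<tau>') A" using cd unfolding code_def by simp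
    have c1: "E \<tau> a = E \<tau>' a" if "a \<in> A" for a
    proof -
      have "restrict (E \<tau>) A a = restrict (E \<tau>') A a" using r by simp
      then show ?thesis using that by simp
    qed
    have c2: "\<And>i j. i < n \<Longrightarrow> j < n \<Longrightarrow> E \<tau> (rep \<tau> i * rep \<tau> j) = E \<tau>' (rep \<tau>' i * rep \<tau>' j)"
    proof -
      fix i j assume "i < n" "j < n"
      then have ij: "(i, j) \<in> {..<n} \<times> {..<n}" by simp
      have "restrict (\<lambda>(i,j). E \<tau> (rep \<tau> i * rep \<tau> j)) ({..<n} \<times> {..<n}) (i, j)
          = restrict (\<lambda>(i,j). E \<tau>' (rep \<tau>' i * rep \<tau>' j)) ({..<n} \<times> {..<n}) (i, j)"
        using cd unfolding code_def by simp
      then show "E \<tau> (rep \<tau> i * rep \<tau> j) = E \<tau>' (rep \<tau>' i * rep \<tau>' j)" using ij by simp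
    qed
    have agreeG: "g \<in> {g. E \<tau> g = E \<tau>' g}" if "g \<in> G" for g
      using that unfolding G_def
    proof (rule gen_induct)
      show "A \<subseteq> {g. E \<tau> g = E \<tau>' g}" using c1 by blast
      show "\<forall>x\<in>{g. E \<tau> g = E \<tau>' g}. \<forall>y\<in>{g. E \<tau> g = E \<tau>' g}. x * y \<in> {g. E \<tau> g = E \<tau>' g}"
      proof (intro ballI, simp)
        fix x y
        assume a: "E \<tau> x = E \<tau>' x" "E \<tau> y = E \<tau>' y"
        have "E \<tau> (x * y) = E \<tau> (rep \<tau> (E \<tau> x) * rep \<tau> (E \<tau> y))" by (rule Emul[OF t])
        also have "\<dots> = E \<tau>' (rep \<tau>' (E \<tau> x) * rep \<tau>' (E \<tau> y))" by (rule c2[OF Elt[OF t] Elt[OF t]])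
        also have "\<dots> = E \<tau>' (x * y)" using Emul[OF t', of x y] a by simp
        finally show "E \<tau> (x * y) = E \<tau>' (x * y)" .
      qed
    qed
    have ag: "(g, h) \<in> \<tau> \<longleftrightarrow> (g, h) \<in> \<tau>'" if "g \<in> G" "h \<in> G" for g h
      using agreeG[OF that(1)] agreeG[OF that(2)] Eiff[OF t, of g h] Eiff[OF t', of g h] by simp
    have o: "open_congruence \<tau>" "open_congruence \<tau>'" using t t' by (auto simp: P_def)
    have d: "closure G = UNIV" using dense by (simp add: G_def)
    have "\<tau> \<subseteq> \<tau>'"
      by (rule cong_determined[OF o(1) o(2) d]) (simp add: ag)
    moreover have "\<tau>' \<subseteq> \<tau>"
      by (rule cong_determined[OF o(2) o(1) d]) (simp add: ag)
    ultimately show "\<tau> = \<tau>'" by (rule subset_antisym)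
  qed
  have "code \<tau> \<in> PiE A (\<lambda>_. {..<n}) \<times> PiE ({..<n} \<times> {..<n}) (\<lambda>_. {..<n})" if "\<tau> \<in> P" for \<tau>
    unfolding code_def using Elt[OF that] by (auto simp add: restrict_PiE_iff)
  then have "code ` P \<subseteq> PiE A (\<lambda>_. {..<n}) \<times> PiE ({..<n} \<times> {..<n}) (\<lambda>_. {..<n})"
    by blast
  moreover have "finite (PiE A (\<lambda>_. {..<n}) \<times> PiE ({..<n} \<times> {..<n}) (\<lambda>_. {..<n}))"
    using fA by (intro finite_cartesian_product finite_PiE) auto
  ultimately have "finite (code ` P)" using finite_subset by blast
  then show ?thesis using inj finite_imageD by (auto simp: P_def)
qed


theorem proposition2:
  fixes S :: "'a::{semigroup_mult,topological_space} itself"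
  assumes "profinite_semigroup S"
  shows "((\<forall>n::nat. n \<ge> 1 \<longrightarrow>
             finite {\<rho> :: ('a \<times> 'a) set. open_congruence \<rho> \<and> cong_index \<rho> = n})
            \<longrightarrow> has_fund_system_fi S)
       \<and> (finitely_generated_profinite S \<longrightarrow> has_fund_system_fi S)"
proof -
  have c: "compact (UNIV::'a set)" using assms by (simp add: profinite_semigroup_def)
  have p1: "(\<forall>n::nat. n \<ge> 1 \<longrightarrow>
             finite {\<rho> :: ('a \<times> 'a) set. open_congruence \<rho> \<and> cong_index \<rho> = n})
            \<longrightarrow> has_fund_system_fi S"
    using part1[OF c] by blast
  moreover have "finitely_generated_profinite S \<longrightarrow> has_fund_system_fi S"
  proof
    assume "finitely_generated_profinite S"
    then obtain A :: "'a set" where "finite A" "closure (gen_subsemigroup A) = UNIV"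
      by (auto simp: finitely_generated_profinite_def)
    then show "has_fund_system_fi S" using p1 part2[OF c] by blast
  qed
  ultimately show ?thesis by blast
qed

end
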